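(* The ideal $I^{(k,r)}$ coincides with each of $J_1=\{f\in V: u_\lambda(f)=0$ for all $\lambda\in P$ with $\sharp^{(k,r)}(\lambda)\ge1\}$, $J_2=\{f\in V: u_\lambda(f)=0$ for all $\lambda\in S^{(k,r)}\}$, $J_3=\{f\in V: u_\lambda(f)=0$ for all $\lambda\in S'^{(k,r)}\}$, where $u_\lambda$ is evaluated at the specialization $(\ast)$.
   Context: Fix integers $n\ge2$, $1\le k\le n-1$, $r\ge2$, $g=\gcd(k+1,r-1)$, $\tau=e^{2\pi\sqrt{-1}/(r-1)}$, and specialize $(\ast)$: $t=u^{(r-1)/g}$, $q=\tau u^{-(k+1)/g}$; $\mathbb K$ is the resulting field of rational functions in (a root of) $u$ and $V=\mathbb K[x_1^{\pm1},\dots,x_n^{\pm1}]$. $Z^{(k,r)}$ is the set of $z\in\mathbb K^n$ for which there exist distinct $i_1,\dots,i_{k+1}\in\{1,\dots,n\}$ and $s_1,\dots,s_k\in\mathbb Z_{\ge0}$ with $z_{i_{a+1}}=z_{i_a}tq^{s_a}$ ($1\le a\le k$), $\sum_as_a\le r-2$, and $i_a<i_{a+1}$ whenever $s_a=0$; $I^{(k,r)}=\{f\in V:f(z)=0\ \forall z\in Z^{(k,r)}\}$. Let $P=\mathbb Z^n$. For $\lambda\in P$, $\rho(\lambda)$ is the unique permutation of $(\frac{n-1}2,\frac{n-3}2,\dots,-\frac{n-1}2)$ with $\rho(\lambda)_i>\rho(\lambda)_j$ iff $\lambda_i>\lambda_j$ or ($\lambda_i=\lambda_j$, $i<j$). For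 $f\in V$, $u_\lambda(f)=f(t^{-\rho(\lambda)_1}q^{-\lambda_1},\dots,t^{-\rho(\lambda)_n}q^{-\lambda_n})$. A wheel in $\lambda$ is a tuple $(i_1,\dots,i_{k+1})$ of distinct indices such that $(u_\lambda(x_1),\dots,u_\lambda(x_n))$ satisfies the defining conditions of $Z^{(k,r)}$ with these indices, i.e. $u_\lambda(x_{i_{a+1}})=u_\lambda(x_{i_a})tq^{s_a}$ for some $s_a\in\mathbb Z_{\ge0}$ with $\sum s_a\le r-2$ and $i_a<i_{a+1}$ if $s_a=0$. Two wheels that are cyclic rotations of each other are identified; $\sharp^{(k,r)}(\lambda)$ is the number of equivalence classes of wheels in $\lambda$. For $\lambda\in P$ let $(i_1,\dots,i_n)$ be the indices with $\rho(\lambda)_{i_a}=\frac{n+1}2-a$. For $a\ge2,b\ge1$, $(i,j)$ is a neighborhood of type $(a,b)$ in $\lambda$ if $\rho(\lambda)_i-\rho(\lambda)_j=a-1$ and either $\lambda_i-\lambda_j\le b-1$, or $\lambda_i-\lambda_j=b$ and $j<i$. $S^{(k,r)}$: the $\lambda$ having a neighborhood of type $(k+1,r-1)$; $S'^{(k,r)}$: the $\lambda$ having a neighborhood $(i,j)$ of type $(k+1,r-1)$ with $\lambda_i-\lambda_j\le r-2$. *)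

theory Defs
  imports Complex_Main "HOL-Computational_Algebra.Polynomial" "HOL-Computational_Algebra.Fraction_Field"
begin

text \<open>The field K: rational functions over the complex numbers in an indeterminate w,
  where w is a square root of u (u = w^2).  Since (r-1)/g and (k+1)/g are integers,
  t and q are Laurent monomials in u, and t^(1/2) = w^((r-1)/g).\<close>

type_synonym K = "complex poly fract"

definition wroot :: K where "wroot = Fract [:0, 1:] 1"

definition uvar :: K where "uvar = wroot ^ 2"

definition gpar :: "nat \<Rightarrow> nat \<Rightarrow> nat" where
  "gpar k r = gcd (k + 1) (r - 1)"

definition tau :: "nat \<Rightarrow> K" where
  "tau r = Fract [: cis (2 * pi / real (r - 1)) :] 1"

definition tpar :: "nat \<Rightarrow> nat \<Rightarrow> K" where
  "tpar k r = uvar powi int ((r - 1) div gpar k r)"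

definition qpar :: "nat \<Rightarrow> nat \<Rightarrow> K" where
  "qpar k r = tau r * uvar powi (- int ((k + 1) div gpar k r))"

text \<open>The square root of t used to form t^(-rho) when rho is a half-integer.\<close>
definition thalf :: "nat \<Rightarrow> nat \<Rightarrow> K" where
  "thalf k r = wroot powi int ((r - 1) div gpar k r)"

definition laurent :: "nat \<Rightarrow> (int list \<Rightarrow> K) set" where
  "laurent n = {f. finite {m. f m \<noteq> 0} \<and> (\<forall>m. f m \<noteq> 0 \<longrightarrow> length m = n)}"

definition leval :: "nat \<Rightarrow> (int list \<Rightarrow> K) \<Rightarrow> (nat \<Rightarrow> K) \<Rightarrow> K" where
  "leval n f z = (\<Sum>m\<in>{m. f m \<noteq> 0}. f m * (\<Prod>i<n. z i powi (m ! i)))"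

definition wheel_cond :: "nat \<Rightarrow> nat \<Rightarrow> nat \<Rightarrow> (nat \<Rightarrow> K) \<Rightarrow> (nat \<Rightarrow> nat) \<Rightarrow> (nat \<Rightarrow> nat) \<Rightarrow> bool" where
  "wheel_cond n k r z i s \<longleftrightarrow>
     inj_on i {..k} \<and> (\<forall>a\<le>k. i a < n) \<and>
     (\<forall>a<k. z (i (Suc a)) = z (i a) * tpar k r * qpar k r ^ s a) \<and>
     (\<Sum>a<k. s a) \<le> r - 2 \<and>
     (\<forall>a<k. s a = 0 \<longrightarrow> i a < i (Suc a))"

definition Zset :: "nat \<Rightarrow> nat \<Rightarrow> nat \<Rightarrow> (nat \<Rightarrow> K) set" where
  "Zset n k r = {z. (\<forall>j<n. z j \<noteq> 0) \<and> (\<forall>j\<ge>n. z j = 0) \<and> (\<exists>i s. wheel_cond n k r z i s)}"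

definition Iideal :: "nat \<Rightarrow> nat \<Rightarrow> nat \<Rightarrow> (int list \<Rightarrow> K) set" where
  "Iideal n k r = {f \<in> laurent n. \<forall>z\<in>Zset n k r. leval n f z = 0}"

text \<open>P = Z^n, as functions vanishing outside {0..n-1}.\<close>
definition Pset :: "nat \<Rightarrow> (nat \<Rightarrow> int) set" where
  "Pset n = {lam. \<forall>i\<ge>n. lam i = 0}"

text \<open>rho(lam)_i = (n+1)/2 - rank_i with rank_i = 1 + #{j. lam_j > lam_i or (lam_j = lam_i and j < i)};
  rho2 = 2 * rho (an integer).\<close>
definition rank_cnt :: "nat \<Rightarrow> (nat \<Rightarrow> int) \<Rightarrow> nat \<Rightarrow> nat" where
  "rank_cnt n lam i = card {j. j < n \<and> (lam j > lam i \<or> (lam j = lam i \<and> j < i))}"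

definition rho2 :: "nat \<Rightarrow> (nat \<Rightarrow> int) \<Rightarrow> nat \<Rightarrow> int" where
  "rho2 n lam i = int n - 1 - 2 * int (rank_cnt n lam i)"

definition upoint :: "nat \<Rightarrow> nat \<Rightarrow> nat \<Rightarrow> (nat \<Rightarrow> int) \<Rightarrow> nat \<Rightarrow> K" where
  "upoint n k r lam i = (if i < n then thalf k r powi (- rho2 n lam i) * qpar k r powi (- lam i) else 0)"

definition ueval :: "nat \<Rightarrow> nat \<Rightarrow> nat \<Rightarrow> (nat \<Rightarrow> int) \<Rightarrow> (int list \<Rightarrow> K) \<Rightarrow> K" where
  "ueval n k r lam f = leval n f (upoint n k r lam)"

definition wheels :: "nat \<Rightarrow> nat \<Rightarrow> nat \<Rightarrow> (nat \<Rightarrow> int) \<Rightarrow> (nat \<Rightarrow> nat) set" where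
  "wheels n k r lam = {i. (\<forall>a>k. i a = 0) \<and> (\<exists>s. wheel_cond n k r (upoint n k r lam) i s)}"

definition rot_equiv :: "nat \<Rightarrow> (nat \<Rightarrow> nat) \<Rightarrow> (nat \<Rightarrow> nat) \<Rightarrow> bool" where
  "rot_equiv k i j \<longleftrightarrow> (\<exists>c\<le>k. \<forall>a\<le>k. j a = i ((a + c) mod (k + 1)))"

definition sharp :: "nat \<Rightarrow> nat \<Rightarrow> nat \<Rightarrow> (nat \<Rightarrow> int) \<Rightarrow> nat" where
  "sharp n k r lam = card ((\<lambda>i. {j\<in>wheels n k r lam. rot_equiv k i j}) ` wheels n k r lam)"

definition nbhd :: "nat \<Rightarrow> nat \<Rightarrow> nat \<Rightarrow> (nat \<Rightarrow> int) \<Rightarrow> nat \<Rightarrow> nat \<Rightarrow> bool" where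
  "nbhd n a b lam i j \<longleftrightarrow> i < n \<and> j < n \<and>
     rho2 n lam i - rho2 n lam j = 2 * (int a - 1) \<and>
     (lam i - lam j \<le> int b - 1 \<or> (lam i - lam j = int b \<and> j < i))"

definition Sset :: "nat \<Rightarrow> nat \<Rightarrow> nat \<Rightarrow> (nat \<Rightarrow> int) set" where
  "Sset n k r = {lam \<in> Pset n. \<exists>i j. nbhd n (k + 1) (r - 1) lam i j}"

definition S'set :: "nat \<Rightarrow> nat \<Rightarrow> nat \<Rightarrow> (nat \<Rightarrow> int) set" where
  "S'set n k r = {lam \<in> Pset n. \<exists>i j. nbhd n (k + 1) (r - 1) lam i j \<and> lam i - lam j \<le> int r - 2}"

definition J1 :: "nat \<Rightarrow> nat \<Rightarrow> nat \<Rightarrow> (int list \<Rightarrow> K) set" where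
  "J1 n k r = {f \<in> laurent n. \<forall>lam\<in>Pset n. sharp n k r lam \<ge> 1 \<longrightarrow> ueval n k r lam f = 0}"

definition J2 :: "nat \<Rightarrow> nat \<Rightarrow> nat \<Rightarrow> (int list \<Rightarrow> K) set" where
  "J2 n k r = {f \<in> laurent n. \<forall>lam\<in>Sset n k r. ueval n k r lam f = 0}"

definition J3 :: "nat \<Rightarrow> nat \<Rightarrow> nat \<Rightarrow> (int list \<Rightarrow> K) set" where
  "J3 n k r = {f \<in> laurent n. \<forall>lam\<in>S'set n k r. ueval n k r lam f = 0}"

end

theory Submission
  imports Defs "HOL-Library.FuncSet"
begin


lemma Fract_const_power: "(Fract (p::complex poly) 1) ^ m = Fract (p ^ m) 1"
  by (induction m) (auto simp: One_fract_def)

lemma wroot_nz: "wroot \<noteq> 0"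
  by (simp add: wroot_def Zero_fract_def eq_fract)

lemma Fract_const_inverse:
  assumes "(a::complex) \<noteq> 0"
  shows "inverse (Fract [:a:] 1) = Fract [:inverse a:] 1"
proof -
  have "[:inverse a:] * [:a:] = 1" using assms by (simp add: one_pCons)
  then show ?thesis using assms by (simp add: eq_fract)
qed

lemma Fract_one_const:
  assumes "(a::complex) \<noteq> 0"
  shows "Fract 1 [:a:] = Fract [:inverse a:] 1"
  using Fract_const_inverse[OF assms] by simp

lemma Fract_const_powi:
  assumes "(b::complex) \<noteq> 0"
  shows "(Fract [:b:] 1) powi m = Fract [:b powi m:] 1"
proof (cases "m \<ge> 0")
  case True
  then show ?thesis unfolding power_int_def Fract_const_power poly_const_pow by simp
next
  case False
  then show ?thesis using assms
    unfolding power_int_def Fract_const_power poly_const_pow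
    by (simp add: Fract_one_const Fract_const_power poly_const_pow power_inverse)
qed

lemma wroot_power: "wroot ^ N = Fract ([:0,1:] ^ N) 1"
  unfolding wroot_def Fract_const_power ..

lemma const_w_pos_ne1:
  assumes "(a::complex) \<noteq> 0" "N > 0"
  shows "Fract [:a:] 1 * wroot ^ N \<noteq> 1"
proof
  assume "Fract [:a:] 1 * wroot ^ N = 1"
  then have "[:a:] * [:0,1:] ^ N = 1"
    by (simp add: wroot_power One_fract_def eq_fract)
  then have "degree ([:a:] * [:0,1:] ^ N) = 0" by simp
  moreover have "degree ([:a:] * [:0,1:] ^ N) = N"
    using assms degree_linear_power[of "0::complex" N] by simp
  ultimately show False using assms by simp
qed

lemma const_w_ne1:
  assumes "(a::complex) \<noteq> 0" "j \<noteq> 0"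
  shows "Fract [:a:] 1 * wroot powi j \<noteq> 1"
proof (cases "j > 0")
  case True
  then show ?thesis using const_w_pos_ne1[OF assms(1), of "nat j"]
    by (simp add: power_int_def)
next
  case False
  then have N: "nat (-j) > 0" using assms by simp
  have "Fract [:inverse a:] 1 * wroot ^ nat (-j) \<noteq> 1"
    using const_w_pos_ne1[OF _ N, of "inverse a"] assms by simp
  show ?thesis
  proof
    assume H: "Fract [:a:] 1 * wroot powi j = 1"
    have W: "wroot ^ nat (-j) \<noteq> 0" using wroot_nz by simp
    have "Fract [:a:] 1 = wroot ^ nat (-j)"
    proof -
      have "wroot powi j = inverse (wroot ^ nat (-j))"
        using False by (simp add: power_int_def power_inverse)
      then have "Fract [:a:] 1 * inverse (wroot ^ nat (-j)) = 1" using H by simp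
      then show ?thesis using W by (simp add: field_simps)
    qed
    then have "Fract [:inverse a:] 1 * wroot ^ nat (-j) = Fract ([:inverse a:] * [:a:]) 1"
      by (metis mult_fract mult_1)
    also have "[:inverse a:] * [:a:] = 1" using assms by (simp add: one_pCons)
    finally have "Fract [:inverse a:] 1 * wroot ^ nat (-j) = 1" by (simp add: One_fract_def)
    then show False using const_w_pos_ne1[OF _ N, of "inverse a"] assms by simp
  qed
qed

lemma gpar_pos: "gpar k r > 0"
  unfolding gpar_def by simp

lemma cpar_pos: "(k + 1) div gpar k r \<ge> 1"
proof -
  have "gpar k r dvd k + 1" unfolding gpar_def by simp
  then have "gpar k r \<le> k + 1" by (simp add: dvd_imp_le)
  then have "gpar k r div gpar k r \<le> (k + 1) div gpar k r" by (rule div_le_mono)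
  then show ?thesis using gpar_pos[of k r] by simp
qed

lemma tau_eq: "tau r = Fract [:cis (2 * pi / real (r - 1)):] 1"
  unfolding tau_def ..

lemma qpar_powi: "qpar k r powi m = Fract [:cis (2 * pi / real (r - 1)) powi m:] 1 *
     wroot powi (- (2 * int ((k + 1) div gpar k r) * m))"
proof -
  have "qpar k r = Fract [:cis (2 * pi / real (r - 1)):] 1 * wroot powi (- (2 * int ((k + 1) div gpar k r)))"
    unfolding qpar_def tau_eq uvar_def power_int_power by simp
  then show ?thesis
    by (simp add: power_int_mult_distrib Fract_const_powi flip: power_int_mult)
qed

lemma qpar_nonroot: "m \<noteq> 0 \<Longrightarrow> qpar k r powi m \<noteq> 1"
  unfolding qpar_powi
  apply (rule const_w_ne1)
  using cpar_pos[of k r] by auto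

lemma qpar_nz: "qpar k r \<noteq> 0"
proof -
  have "Fract [:cis (2 * pi / real (r - 1)):] 1 \<noteq> 0"
    by (simp add: Zero_fract_def eq_fract)
  then show ?thesis using qpar_powi[of k r 1] wroot_nz by simp
qed

lemma thalf_nz: "thalf k r \<noteq> 0"
  unfolding thalf_def using wroot_nz by simp

lemma tpar_thalf: "tpar k r = thalf k r ^ 2"
  unfolding tpar_def thalf_def uvar_def power_int_power power_int_power' by (simp add: mult.commute)

lemma tpar_nz: "tpar k r \<noteq> 0"
  unfolding tpar_thalf using thalf_nz by simp

lemma tau_power: "r \<ge> 2 \<Longrightarrow> tau r ^ (r - 1) = 1"
proof -
  assume r: "r \<ge> 2"
  have "cis (2 * pi / real (r - 1)) ^ (r - 1) = 1"
    unfolding DeMoivre using r by (simp add: of_nat_diff)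
  then show ?thesis unfolding tau_eq Fract_const_power poly_const_pow
    by (simp add: One_fract_def one_pCons)
qed

lemma tq_relation:
  assumes "r \<ge> 2"
  shows "tpar k r ^ (k + 1) * qpar k r ^ (r - 1) = 1"
proof -
  let ?g = "gpar k r"
  have g1: "?g dvd k + 1" and g2: "?g dvd r - 1" unfolding gpar_def by simp_all
  have E: "int ((r - 1) div ?g) * int (k + 1) = int ((k + 1) div ?g) * int (r - 1)"
  proof -
    have "(r - 1) div ?g * (k + 1) = (r - 1) * (k + 1) div ?g" using g2 by (simp add: dvd_div_mult)
    also have "\<dots> = (k + 1) * (r - 1) div ?g" by (simp add: mult.commute)
    also have "\<dots> = (k + 1) div ?g * (r - 1)" using g1 by (simp add: dvd_div_mult)
    finally show ?thesis by (metis of_nat_mult)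
  qed
  have "qpar k r ^ (r - 1) = tau r ^ (r - 1) * (uvar powi (- int ((k + 1) div ?g))) ^ (r - 1)"
    unfolding qpar_def by (simp add: power_mult_distrib)
  also have "\<dots> = uvar powi (- int ((k + 1) div ?g) * int (r - 1))"
    using tau_power[OF assms] by (simp add: power_int_power')
  finally have Q: "qpar k r ^ (r - 1) = uvar powi (- int ((k + 1) div ?g) * int (r - 1))" .
  have T: "tpar k r ^ (k + 1) = uvar powi (int ((r - 1) div ?g) * int (k + 1))"
    unfolding tpar_def power_int_power' ..
  have U: "uvar \<noteq> 0" unfolding uvar_def using wroot_nz by simp
  show ?thesis unfolding Q T E using U
    by (simp add: power_int_minus)
qed



lemma exp_indep:
  fixes \<beta> :: "'b \<Rightarrow> 'a::field"
  assumes "finite D" "inj_on \<beta> D" "\<forall>d\<in>D. \<beta> d \<noteq> 0"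
    "\<forall>N\<ge>L. (\<Sum>d\<in>D. c d * \<beta> d ^ N) = 0" "d \<in> D"
  shows "c d = 0"
  using assms
proof (induction D arbitrary: c L d rule: finite_induct)
  case empty
  then show ?case by simp
next
  case (insert d0 D)
  let ?c' = "\<lambda>d. c d * (\<beta> d - \<beta> d0)"
  have H: "\<forall>N\<ge>L. (\<Sum>d\<in>D. ?c' d * \<beta> d ^ N) = 0"
  proof (intro allI impI)
    fix N assume N: "N \<ge> L"
    have A: "(\<Sum>d\<in>insert d0 D. c d * \<beta> d ^ Suc N) = 0" using insert.prems(3) N le_Suc_eq by blast
    have B: "(\<Sum>d\<in>insert d0 D. c d * \<beta> d ^ N) = 0" using insert.prems(3) N by simp
    have "(\<Sum>d\<in>D. ?c' d * \<beta> d ^ N) =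
        (\<Sum>d\<in>insert d0 D. c d * \<beta> d ^ Suc N) - \<beta> d0 * (\<Sum>d\<in>insert d0 D. c d * \<beta> d ^ N)"
      using insert.hyps by (simp add: sum_distrib_left sum_subtractf[symmetric] algebra_simps)
    then show "(\<Sum>d\<in>D. ?c' d * \<beta> d ^ N) = 0" using A B by simp
  qed
  have Z: "\<forall>d\<in>D. c d = 0"
  proof
    fix d assume d: "d \<in> D"
    have "?c' d = 0"
      by (rule insert.IH[OF _ _ H d]) (use insert.prems in auto)
    moreover have "\<beta> d \<noteq> \<beta> d0" using insert.prems(1) insert.hyps d
      by (intro inj_on_contraD[of \<beta> "insert d0 D"]) auto
    ultimately show "c d = 0" by simp
  qed
  show ?case
  proof (cases "d = d0")
    case True
    have "(\<Sum>d\<in>insert d0 D. c d * \<beta> d ^ L) = 0" using insert.prems(3) by simp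
    then have "c d0 * \<beta> d0 ^ L = 0" using Z insert.hyps by simp
    then show ?thesis using True insert.prems(2) by simp
  next
    case False
    then show ?thesis using Z insert.prems(4) by simp
  qed
qed

lemma regroup:
  fixes y :: "'v \<Rightarrow> 'a::field"
  assumes "finite M" "v \<notin> S" "finite S"
  shows "(\<Sum>x\<in>M. a x * (\<Prod>u\<in>insert v S. y u powi E x u)) =
    (\<Sum>d\<in>(\<lambda>x. E x v) ` M. y v powi d * (\<Sum>x\<in>{x\<in>M. E x v = d}. a x * (\<Prod>u\<in>S. y u powi E x u)))"
proof -
  have "(\<Sum>x\<in>M. a x * (\<Prod>u\<in>insert v S. y u powi E x u)) =
      (\<Sum>x\<in>M. y v powi E x v * (a x * (\<Prod>u\<in>S. y u powi E x u)))"
  proof (rule sum.cong)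
    fix x assume "x \<in> M"
    show "a x * (\<Prod>u\<in>insert v S. y u powi E x u) = y v powi E x v * (a x * (\<Prod>u\<in>S. y u powi E x u))"
      using assms(2,3) by (simp add: algebra_simps)
  qed simp
  also have "\<dots> = (\<Sum>d\<in>(\<lambda>x. E x v) ` M. (\<Sum>x\<in>{x\<in>M. E x v = d}. y v powi E x v * (a x * (\<Prod>u\<in>S. y u powi E x u))))"
    by (rule sum.image_gen[OF assms(1)])
  also have "\<dots> = (\<Sum>d\<in>(\<lambda>x. E x v) ` M. y v powi d * (\<Sum>x\<in>{x\<in>M. E x v = d}. a x * (\<Prod>u\<in>S. y u powi E x u)))"
    by (rule sum.cong) (auto simp: sum_distrib_left)
  finally show ?thesis .
qed

lemma powi_pow_swap: "((Q::'a::field) ^ N) powi d = (Q powi d) ^ N"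
  by (simp add: power_int_power power_int_power' mult.commute)

lemma chain_vanish:
  fixes C y :: "nat \<Rightarrow> 'a::field" and Q :: 'a and E :: "'m \<Rightarrow> nat \<Rightarrow> int"
  assumes "distinct vs" "finite M" "\<forall>v\<in>set vs. C v \<noteq> 0" "Q \<noteq> 0"
    "\<forall>m::int. m \<noteq> 0 \<longrightarrow> Q powi m \<noteq> 1"
    "\<forall>\<mu>::nat\<Rightarrow>nat. sorted_wrt (\<lambda>u v. \<mu> v < \<mu> u) vs \<longrightarrow>
        (\<Sum>x\<in>M. a x * (\<Prod>v\<in>set vs. (C v * Q ^ \<mu> v) powi E x v)) = 0"
    "\<forall>v\<in>set vs. y v \<noteq> 0"
  shows "(\<Sum>x\<in>M. a x * (\<Prod>v\<in>set vs. y v powi E x v)) = 0"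
  using assms
proof (induction vs arbitrary: M a y)
  case Nil
  then show ?case by auto
next
  case (Cons v vs)
  let ?D = "(\<lambda>x. E x v) ` M"
  let ?G = "\<lambda>d (y::nat \<Rightarrow> 'a). (\<Sum>x\<in>{x\<in>M. E x v = d}. a x * (\<Prod>u\<in>set vs. y u powi E x u))"
  have vnot: "v \<notin> set vs" using Cons.prems(1) by simp
  have inj: "inj_on (\<lambda>d. Q powi d) ?D"
  proof (rule inj_onI)
    fix d1 d2 assume "Q powi d1 = Q powi d2"
    then have "Q powi (d1 - d2) = 1" using Cons.prems(4) by (simp add: power_int_diff)
    then show "d1 = d2" using Cons.prems(5) by (metis eq_iff_diff_eq_0)
  qed
  have Gzero: "?G d y' = 0" if d: "d \<in> ?D" and y': "\<forall>u\<in>set vs. y' u \<noteq> 0" for d y'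
  proof -
    have "(\<Sum>x\<in>{x\<in>M. E x v = d}. a x * (\<Prod>u\<in>set vs. y' u powi E x u)) = 0"
    proof (rule Cons.IH)
      show "distinct vs" using Cons.prems(1) by simp
      show "finite {x \<in> M. E x v = d}" using Cons.prems(2) by simp
      show "\<forall>v\<in>set vs. C v \<noteq> 0" using Cons.prems(3) by simp
      show "Q \<noteq> 0" by fact
      show "\<forall>m::int. m \<noteq> 0 \<longrightarrow> Q powi m \<noteq> 1" by fact
      show "\<forall>v\<in>set vs. y' v \<noteq> 0" by fact
      show "\<forall>\<mu>::nat\<Rightarrow>nat. sorted_wrt (\<lambda>u v. \<mu> v < \<mu> u) vs \<longrightarrow>
        (\<Sum>x\<in>{x \<in> M. E x v = d}. a x * (\<Prod>v\<in>set vs. (C v * Q ^ \<mu> v) powi E x v)) = 0"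
      proof (intro allI impI)
        fix \<mu> :: "nat \<Rightarrow> nat"
        assume S: "sorted_wrt (\<lambda>u v. \<mu> v < \<mu> u) vs"
        define L where "L = Suc (Max (insert 0 (\<mu> ` set vs)))"
        let ?Y = "\<lambda>u. C u * Q ^ \<mu> u"
        have HN: "(\<Sum>d\<in>?D. (C v powi d * ?G d ?Y) * (Q powi d) ^ N) = 0" if N: "N \<ge> L" for N
        proof -
          let ?\<mu>' = "\<mu>(v := N)"
          have "sorted_wrt (\<lambda>u w. ?\<mu>' w < ?\<mu>' u) (v # vs)"
          proof -
            have "\<forall>u\<in>set vs. \<mu> u < N"
            proof
              fix u assume "u \<in> set vs"
              then have "\<mu> u \<le> Max (insert 0 (\<mu> ` set vs))" by simp
              then show "\<mu> u < N" using N unfolding L_def by simp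
            qed
            moreover have "sorted_wrt (\<lambda>u w. ?\<mu>' w < ?\<mu>' u) vs"
              by (rule sorted_wrt_mono_rel[OF _ S]) (use vnot in auto)
            ultimately show ?thesis using vnot by auto
          qed
          then have H: "(\<Sum>x\<in>M. a x * (\<Prod>u\<in>set (v # vs). (C u * Q ^ ?\<mu>' u) powi E x u)) = 0"
            using Cons.prems(6) by blast
          have "(\<Sum>x\<in>M. a x * (\<Prod>u\<in>set (v # vs). (C u * Q ^ ?\<mu>' u) powi E x u)) =
             (\<Sum>d\<in>?D. (C v * Q ^ N) powi d * ?G d (\<lambda>u. C u * Q ^ ?\<mu>' u))"
            using regroup[OF Cons.prems(2) vnot finite_set, of a "\<lambda>u. C u * Q ^ ?\<mu>' u" E] by simp
          also have "\<dots> = (\<Sum>d\<in>?D. (C v powi d * ?G d ?Y) * (Q powi d) ^ N)"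
          proof (rule sum.cong)
            fix d assume "d \<in> ?D"
            have "?G d (\<lambda>u. C u * Q ^ ?\<mu>' u) = ?G d ?Y"
            proof (rule sum.cong[OF refl])
              fix x assume "x \<in> {x \<in> M. E x v = d}"
              have "(\<Prod>u\<in>set vs. (C u * Q ^ ?\<mu>' u) powi E x u) = (\<Prod>u\<in>set vs. (C u * Q ^ \<mu> u) powi E x u)"
              proof (rule prod.cong[OF refl])
                fix u assume "u \<in> set vs"
                then have "u \<noteq> v" using vnot by auto
                then show "(C u * Q ^ ?\<mu>' u) powi E x u = (C u * Q ^ \<mu> u) powi E x u" by simp
              qed
              then show "a x * (\<Prod>u\<in>set vs. (C u * Q ^ ?\<mu>' u) powi E x u) = a x * (\<Prod>u\<in>set vs. (C u * Q ^ \<mu> u) powi E x u)"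
                by simp
            qed
            then show "(C v * Q ^ N) powi d * ?G d (\<lambda>u. C u * Q ^ ?\<mu>' u) = (C v powi d * ?G d ?Y) * (Q powi d) ^ N"
              by (simp add: power_int_mult_distrib powi_pow_swap)
          qed simp
          finally show ?thesis using H by simp
        qed
        have fD: "finite ?D" using Cons.prems(2) by simp
        have nzD: "\<forall>d\<in>?D. Q powi d \<noteq> 0" using Cons.prems(4) by simp
        have "C v powi d * ?G d ?Y = 0"
          using exp_indep[OF fD inj nzD _ d, of L "\<lambda>d. C v powi d * ?G d ?Y"] HN by blast
        moreover have "C v powi d \<noteq> 0" using Cons.prems(3) by simp
        ultimately have "?G d ?Y = 0" using mult_eq_0_iff by blast
        then show "(\<Sum>x\<in>{x \<in> M. E x v = d}. a x * (\<Prod>v\<in>set vs. (C v * Q ^ \<mu> v) powi E x v)) = 0"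
          by simp
      qed
    qed
    then show ?thesis .
  qed
  have "(\<Sum>x\<in>M. a x * (\<Prod>u\<in>set (v # vs). y u powi E x u)) = (\<Sum>d\<in>?D. y v powi d * ?G d y)"
    using regroup[OF Cons.prems(2) vnot finite_set, of a y E] by simp
  also have "\<dots> = 0"
  proof (rule sum.neutral, rule ballI)
    fix d assume "d \<in> ?D"
    moreover have "\<forall>u\<in>set vs. y u \<noteq> 0" using Cons.prems(7) by simp
    ultimately have "?G d y = 0" by (rule Gzero)
    then show "y v powi d * ?G d y = 0" by simp
  qed
  finally show ?case .
qed



definition prec :: "(nat \<Rightarrow> int) \<Rightarrow> nat \<Rightarrow> nat \<Rightarrow> bool" where
  "prec lam j x \<longleftrightarrow> lam j > lam x \<or> (lam j = lam x \<and> j < x)"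

lemma rank_cnt_prec: "rank_cnt n lam x = card {j. j < n \<and> prec lam j x}"
  unfolding rank_cnt_def prec_def ..

lemma prec_trans: "prec lam a b \<Longrightarrow> prec lam b c \<Longrightarrow> prec lam a c"
  unfolding prec_def by auto

lemma prec_irrefl: "\<not> prec lam a a"
  unfolding prec_def by auto

lemma prec_total: "a \<noteq> b \<Longrightarrow> prec lam a b \<or> prec lam b a"
  unfolding prec_def by auto

lemma rank_lt_n: "x < n \<Longrightarrow> rank_cnt n lam x < n"
proof -
  assume x: "x < n"
  have "{j. j < n \<and> prec lam j x} \<subseteq> {..<n} - {x}" using prec_irrefl by auto
  then have "card {j. j < n \<and> prec lam j x} \<le> card ({..<n} - {x})" by (intro card_mono) auto
  also have "\<dots> < n" using x by simp
  finally show ?thesis unfolding rank_cnt_prec .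
qed

lemma rank_mono: "prec lam x y \<Longrightarrow> x < n \<Longrightarrow> rank_cnt n lam x < rank_cnt n lam y"
proof -
  assume p: "prec lam x y" and x: "x < n"
  have "{j. j < n \<and> prec lam j x} \<subset> {j. j < n \<and> prec lam j y}"
    using p x prec_trans[of lam _ x y] prec_irrefl[of lam x] by blast
  then show ?thesis unfolding rank_cnt_prec by (intro psubset_card_mono) auto
qed

lemma rank_inj: "inj_on (rank_cnt n lam) {..<n}"
proof (rule inj_onI)
  fix x y assume "x \<in> {..<n}" "y \<in> {..<n}" "rank_cnt n lam x = rank_cnt n lam y"
  then show "x = y" using prec_total[of x y lam] rank_mono[of lam x y n] rank_mono[of lam y x n]
    by fastforce
qed

lemma rank_bij: "bij_betw (rank_cnt n lam) {..<n} {..<n}"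
proof -
  have "rank_cnt n lam ` {..<n} \<subseteq> {..<n}" using rank_lt_n by auto
  moreover have "card (rank_cnt n lam ` {..<n}) = card {..<n::nat}"
    using card_image[OF rank_inj] by simp
  ultimately have "rank_cnt n lam ` {..<n} = {..<n}" by (intro card_subset_eq) auto
  then show ?thesis using rank_inj unfolding bij_betw_def by simp
qed

lemma rank_surj: "m < n \<Longrightarrow> \<exists>x<n. rank_cnt n lam x = m"
  using rank_bij[of n lam] unfolding bij_betw_def by (metis imageE lessThan_iff)

lemma rank_succ_prec: "x < n \<Longrightarrow> y < n \<Longrightarrow> rank_cnt n lam y = Suc (rank_cnt n lam x) \<Longrightarrow> prec lam x y"
  using prec_total[of x y lam] rank_mono[of lam y x n] by fastforce

lemma rho2_diff: "rho2 n lam x - rho2 n lam y = 2 * (int (rank_cnt n lam y) - int (rank_cnt n lam x))"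
  unfolding rho2_def by simp

lemma upoint_lt: "x < n \<Longrightarrow> upoint n k r lam x = thalf k r powi (- rho2 n lam x) * qpar k r powi (- lam x)"
  unfolding upoint_def by simp

lemma upoint_nz: "x < n \<Longrightarrow> upoint n k r lam x \<noteq> 0"
  using thalf_nz qpar_nz by (simp add: upoint_lt)

lemma upoint_step:
  assumes "x < n" "y < n" "rank_cnt n lam y = Suc (rank_cnt n lam x)" "lam y \<le> lam x"
  shows "upoint n k r lam y = upoint n k r lam x * tpar k r * qpar k r ^ nat (lam x - lam y)"
proof -
  let ?T = "thalf k r" and ?q = "qpar k r"
  have R: "- rho2 n lam y = - rho2 n lam x + 2" using rho2_diff[of n lam x y] assms(3) by simp
  have L: "- lam y = - lam x + int (nat (lam x - lam y))" using assms(4) by simp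
  have A1: "?T powi (- rho2 n lam y) = ?T powi (- rho2 n lam x) * ?T ^ 2"
    unfolding R using power_int_add[of ?T "- rho2 n lam x" 2] thalf_nz[of k r] by simp
  have A2: "?q powi (- lam y) = ?q powi (- lam x) * ?q ^ nat (lam x - lam y)"
    unfolding L using power_int_add[of ?q "- lam x" "int (nat (lam x - lam y))"] qpar_nz[of k r]
    by (simp only: power_int_of_nat) simp
  show ?thesis
    unfolding upoint_lt[OF assms(1)] upoint_lt[OF assms(2)] A1 A2 tpar_thalf
    by (simp add: mult_ac)
qed

lemma upoint_wrap:
  assumes "r \<ge> 2" "i < n" "j < n" "rho2 n lam i - rho2 n lam j = 2 * int k" "lam i - lam j = int r - 1"
  shows "upoint n k r lam i = upoint n k r lam j * tpar k r"
proof -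
  let ?T = "thalf k r" and ?q = "qpar k r"
  have R: "- rho2 n lam i = - rho2 n lam j + (- int (2 * k))" using assms(4) by simp
  have L: "- lam i = - lam j + (- int (r - 1))" using assms(1,5) by simp
  have tq: "?T ^ (2 * k) * ?T ^ 2 * ?q ^ (r - 1) = 1"
    using tq_relation[OF assms(1), of k] unfolding tpar_thalf
    by (simp add: power_mult[symmetric] power_add[symmetric] mult.commute)
  have K: "?T powi (- int (2 * k)) * ?q powi (- int (r - 1)) = ?T ^ 2"
  proof -
    have "?T powi (- int (2 * k)) * ?q powi (- int (r - 1)) = inverse (?T ^ (2 * k) * ?q ^ (r - 1))"
      by (simp only: power_int_minus power_int_of_nat) simp
    also have "?T ^ (2 * k) * ?q ^ (r - 1) = inverse (?T ^ 2)"
      using tq thalf_nz by (simp add: field_simps)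
    finally show ?thesis by simp
  qed
  have A1: "?T powi (- rho2 n lam i) = ?T powi (- rho2 n lam j) * ?T powi (- int (2 * k))"
    unfolding R using power_int_add[of ?T "- rho2 n lam j" "- int (2 * k)"] thalf_nz[of k r] by simp
  have A2: "?q powi (- lam i) = ?q powi (- lam j) * ?q powi (- int (r - 1))"
    unfolding L using power_int_add[of ?q "- lam j" "- int (r - 1)"] qpar_nz[of k r] by simp
  show ?thesis
    unfolding upoint_lt[OF assms(2)] upoint_lt[OF assms(3)] A1 A2 tpar_thalf
    using K by (simp add: mult_ac)
qed



lemma rot_inj:
  fixes a k :: nat
  shows "inj_on (\<lambda>b. (a + b) mod (Suc k)) {..<Suc k}"
proof (rule inj_onI)
  fix b b' assume b: "b \<in> {..<Suc k}" and b': "b' \<in> {..<Suc k}"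
    and eq: "(a + b) mod Suc k = (a + b') mod Suc k"
  show "b = b'"
  proof (cases "b \<le> b'")
    case True
    then have "Suc k dvd (a + b') - (a + b)" using eq mod_eq_dvd_iff_nat[of "a + b" "a + b'" "Suc k"] by simp
    then have "Suc k dvd b' - b" by simp
    moreover have "b' - b < Suc k" using b' by simp
    ultimately have "b' - b = 0" by (metis dvd_imp_le leD neq0_conv)
    then show ?thesis using True by simp
  next
    case False
    then have "Suc k dvd (a + b) - (a + b')" using eq mod_eq_dvd_iff_nat[of "a + b'" "a + b" "Suc k"] by simp
    then have "Suc k dvd b - b'" by simp
    moreover have "b - b' < Suc k" using b by simp
    ultimately have "b - b' = 0" by (metis dvd_imp_le leD neq0_conv)
    then show ?thesis using False by simp
  qed
qed

lemma rot_bij: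
  fixes a k :: nat
  shows "bij_betw (\<lambda>b. (a + b) mod (Suc k)) {..<Suc k} {..<Suc k}"
proof -
  have "(\<lambda>b. (a + b) mod (Suc k)) ` {..<Suc k} \<subseteq> {..<Suc k}" by auto
  moreover have "card ((\<lambda>b. (a + b) mod (Suc k)) ` {..<Suc k}) = card {..<Suc k}"
    using card_image[OF rot_inj] by simp
  ultimately have "(\<lambda>b. (a + b) mod (Suc k)) ` {..<Suc k} = {..<Suc k}"
    by (intro card_subset_eq) auto
  then show ?thesis using rot_inj unfolding bij_betw_def by simp
qed

lemma wheel_of_nbhd:
  assumes r: "r \<ge> 2" and nb: "nbhd n (k + 1) (r - 1) lam i j"
  shows "\<exists>ii s. wheel_cond n k r (upoint n k r lam) ii s"
proof -
  let ?rk = "rank_cnt n lam"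
  let ?z = "upoint n k r lam"
  have i: "i < n" and j: "j < n" and rh: "rho2 n lam i - rho2 n lam j = 2 * int k"
    and cs: "lam i - lam j \<le> int r - 2 \<or> (lam i - lam j = int r - 1 \<and> j < i)"
    using nb r unfolding nbhd_def by (auto simp: of_nat_diff)
  have rkj: "?rk j = ?rk i + k" using rh rho2_diff[of n lam i j] by simp
  have rkjn: "?rk j < n" using rank_lt_n[OF j] .
  define c where "c a = (SOME x. x < n \<and> ?rk x = ?rk i + a)" for a
  have cprop: "c a < n \<and> ?rk (c a) = ?rk i + a" if "a \<le> k" for a
  proof -
    have "?rk i + a < n" using that rkj rkjn by simp
    then obtain x where "x < n" "?rk x = ?rk i + a" using rank_surj by blast
    then show ?thesis unfolding c_def by (rule someI[where P="\<lambda>x. x < n \<and> ?rk x = ?rk i + a", OF conjI])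
  qed
  have c0: "c 0 = i"
    using cprop[of 0] i rank_inj[of n lam] by (auto dest: inj_onD)
  have ck: "c k = j"
    using cprop[of k] j rkj rank_inj[of n lam] by (metis inj_onD lessThan_iff order_refl)
  have cinj: "inj_on c {..k}"
  proof (rule inj_onI)
    fix a b assume "a \<in> {..k}" "b \<in> {..k}" "c a = c b"
    then show "a = b" using cprop[of a] cprop[of b] by (metis add_left_cancel atMost_iff)
  qed
  have cprec: "prec lam (c a) (c (Suc a))" if "a < k" for a
    using cprop[of a] cprop[of "Suc a"] that by (intro rank_succ_prec[of _ n]) auto
  define s where "s a = nat (lam (c a) - lam (c (Suc a)))" for a
  have sint: "int (s a) = lam (c a) - lam (c (Suc a))" if "a < k" for a
    using cprec[OF that] unfolding s_def prec_def by auto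
  have step: "?z (c (Suc a)) = ?z (c a) * tpar k r * qpar k r ^ s a" if "a < k" for a
    unfolding s_def
    using cprop[of a] cprop[of "Suc a"] that cprec[OF that]
    by (intro upoint_step) (auto simp: prec_def)
  have ord: "c a < c (Suc a)" if "a < k" "s a = 0" for a
    using cprec[OF that(1)] sint[OF that(1)] that(2) unfolding prec_def by auto
  have sumeq: "int (\<Sum>a<k. s a) = lam i - lam j"
  proof -
    have "int (\<Sum>a<k. s a) = (\<Sum>a<k. lam (c a) - lam (c (Suc a)))"
      by (simp add: sint)
    also have "\<dots> = lam (c 0) - lam (c k)" by (rule sum_lessThan_telescope')
    finally show ?thesis using c0 ck by simp
  qed
  show ?thesis
  proof (cases "lam i - lam j \<le> int r - 2")
    case True
    have "int (\<Sum>a<k. s a) \<le> int (r - 2)" using sumeq True r by (simp add: of_nat_diff)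
    then have sle: "(\<Sum>a<k. s a) \<le> r - 2" by linarith
    have "wheel_cond n k r ?z c s"
      unfolding wheel_cond_def
      using cinj cprop step ord sle by auto
    then show ?thesis by blast
  next
    case False
    then have eq: "lam i - lam j = int r - 1" and ji: "j < i" using cs by auto
    have sumr: "(\<Sum>a<k. s a) = r - 1" using sumeq eq r by linarith
    obtain a0 where a0: "a0 < k" "s a0 > 0"
    proof (rule ccontr)
      assume "\<not> thesis"
      then have "\<forall>a<k. s a = 0" using that by auto
      then have "(\<Sum>a<k. s a) = 0" by simp
      then show False using sumr r by simp
    qed
    define \<sigma> where "\<sigma> e = (if e < k then s e else 0)" for e
    define h where "h b = (Suc a0 + b) mod (Suc k)" for b
    have hk: "h b \<le> k" for b unfolding h_def
      using less_Suc_eq_le mod_less_divisor zero_less_Suc by blast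
    have hSuc: "Suc (h b) mod Suc k = h (Suc b)" for b
      unfolding h_def by (simp add: mod_Suc_eq)
    have G: "?z (c (Suc e mod Suc k)) = ?z (c e) * tpar k r * qpar k r ^ \<sigma> e
        \<and> (\<sigma> e = 0 \<longrightarrow> c e < c (Suc e mod Suc k))" if "e \<le> k" for e
    proof (cases "e < k")
      case True
      then show ?thesis using step ord unfolding \<sigma>_def by simp
    next
      case False
      then have ek: "e = k" using that by simp
      have "?z i = ?z j * tpar k r" by (rule upoint_wrap[OF r i j rh eq])
      then show ?thesis using ek c0 ck ji unfolding \<sigma>_def by simp
    qed
    define ii where "ii b = c (h b)" for b
    define s' where "s' b = \<sigma> (h b)" for b
    have hinj: "inj_on h {..k}"
      using rot_inj[of "Suc a0" k] unfolding h_def by (simp add: lessThan_Suc_atMost)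
    have iiinj: "inj_on ii {..k}"
    proof (rule inj_onI)
      fix a b assume "a \<in> {..k}" "b \<in> {..k}" "ii a = ii b"
      then have "h a = h b" using cinj hk unfolding ii_def by (auto dest: inj_onD)
      then show "a = b" using hinj \<open>a \<in> {..k}\<close> \<open>b \<in> {..k}\<close> by (auto dest: inj_onD)
    qed
    have sum_full: "(\<Sum>b<Suc k. s' b) = r - 1"
    proof -
      have "(\<Sum>b<Suc k. s' b) = (\<Sum>e<Suc k. \<sigma> e)"
        unfolding s'_def h_def by (rule sum.reindex_bij_betw[OF rot_bij])
      also have "\<dots> = (\<Sum>e<k. s e)" unfolding \<sigma>_def by simp
      finally show ?thesis using sumr by simp
    qed
    have hklast: "h k = a0"
    proof -
      have "Suc a0 + k = a0 + Suc k" by simp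
      then have "(Suc a0 + k) mod Suc k = a0 mod Suc k" by (metis mod_add_self2)
      then show ?thesis unfolding h_def using a0(1) by simp
    qed
    have "(\<Sum>b<k. s' b) + s a0 = r - 1"
      using sum_full hklast a0(1) unfolding s'_def \<sigma>_def by simp
    then have sumle: "(\<Sum>b<k. s' b) \<le> r - 2" using a0(2) by linarith
    have "wheel_cond n k r ?z ii s'"
      unfolding wheel_cond_def
    proof (intro conjI allI impI)
      show "inj_on ii {..k}" by (rule iiinj)
      fix a assume "a \<le> k" then show "ii a < n" unfolding ii_def using cprop hk by auto
    next
      fix a assume "a < k"
      show "?z (ii (Suc a)) = ?z (ii a) * tpar k r * qpar k r ^ s' a"
        using G[OF hk[of a]] unfolding ii_def s'_def hSuc by simp
    next
      show "(\<Sum>a<k. s' a) \<le> r - 2" by (rule sumle)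
    next
      fix a assume "a < k" "s' a = 0"
      then show "ii a < ii (Suc a)"
        using G[OF hk[of a]] unfolding ii_def s'_def hSuc by simp
    qed
    then show ?thesis by blast
  qed
qed



lemma leval_cong: "(\<And>j. j < n \<Longrightarrow> z1 j = z2 j) \<Longrightarrow> leval n f z1 = leval n f z2"
  unfolding leval_def by (intro sum.cong refl arg_cong2[where f="(*)"] prod.cong) auto

lemma prod_powi_sum:
  fixes x :: "'a::field"
  assumes "finite A" "x \<noteq> 0"
  shows "(\<Prod>j\<in>A. x powi e j) = x powi (\<Sum>j\<in>A. e j)"
  using assms(1)
proof (induction A rule: finite_induct)
  case empty then show ?case by simp
next
  case (insert a A)
  then show ?case using assms(2) by (simp add: power_int_add)
qed

lemma sorted_wrt_strict_mono:
  "sorted_wrt R xs \<Longrightarrow> sorted_wrt (<) xs \<Longrightarrow> a \<in> set xs \<Longrightarrow> b \<in> set xs \<Longrightarrow> (a::nat) < b \<Longrightarrow> R a b"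
proof (induction xs)
  case Nil then show ?case by simp
next
  case (Cons h t)
  show ?case
  proof (cases "a = h")
    case True
    then have "b \<in> set t" using Cons.prems by auto
    then show ?thesis using Cons.prems True by simp
  next
    case False
    then have a: "a \<in> set t" using Cons.prems by simp
    then have "h < a" using Cons.prems by simp
    then have "b \<in> set t" using Cons.prems by auto
    then show ?thesis using Cons a by simp
  qed
qed

lemma qinv_powi: "qpar k r powi (- int m) = (inverse (qpar k r)) ^ m"
  by (simp add: power_int_minus power_inverse)



lemma J3_sub_I:
  assumes r: "r \<ge> 2" and f: "f \<in> J3 n k r" and z: "z \<in> Zset n k r"
  shows "leval n f z = 0"
proof -
  have fl: "f \<in> laurent n" and fJ: "\<forall>lam\<in>S'set n k r. ueval n k r lam f = 0"
    using f unfolding J3_def by auto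
  have znz: "\<forall>j<n. z j \<noteq> 0" using z unfolding Zset_def by auto
  obtain i s where W: "wheel_cond n k r z i s" using z unfolding Zset_def by auto
  have iinj: "inj_on i {..k}" and ilt: "\<forall>a\<le>k. i a < n"
    and istep: "\<forall>a<k. z (i (Suc a)) = z (i a) * tpar k r * qpar k r ^ s a"
    and ssum: "(\<Sum>a<k. s a) \<le> r - 2"
    and iord: "\<forall>a<k. s a = 0 \<longrightarrow> i a < i (Suc a)"
    using W unfolding wheel_cond_def by auto
  define B where "B = i ` {..k}"
  define Ot where "Ot = {..<n} - B"
  define v0 where "v0 = i 0"
  define S where "S a = (\<Sum>b<a. s b)" for a
  define ia where "ia = the_inv_into {..k} i"
  have BOt: "B \<subseteq> {..<n}" unfolding B_def using ilt by auto
  have v0B: "v0 \<in> B" unfolding v0_def B_def by auto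
  have v0Ot: "v0 \<notin> Ot" unfolding Ot_def using v0B by auto
  have finOt: "finite Ot" unfolding Ot_def by simp
  have finB: "finite B" unfolding B_def by simp
  have ia_i: "ia (i a) = a" if "a \<le> k" for a
    unfolding ia_def using the_inv_into_f_f[OF iinj] that by simp
  have i_ia: "i (ia j) = j" "ia j \<le> k" if "j \<in> B" for j
    unfolding ia_def using f_the_inv_into_f[OF iinj] the_inv_into_into[OF iinj, of j "{..k}"] that
    unfolding B_def by auto
  have CL: "S b \<le> S a \<and> (S b = S a \<and> b < a \<longrightarrow> i b < i a)" if "b \<le> a" "a \<le> k" for a b
    using that
  proof (induction a)
    case 0 then show ?case by simp
  next
    case (Suc a)
    show ?case
    proof (cases "b = Suc a")
      case True then show ?thesis by simp
    next
      case False
      then have ba: "b \<le> a" using Suc.prems by simp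
      have IH: "S b \<le> S a \<and> (S b = S a \<and> b < a \<longrightarrow> i b < i a)" using Suc.IH ba Suc.prems by simp
      have SS: "S (Suc a) = S a + s a" unfolding S_def by simp
      have "S b = S (Suc a) \<and> b < Suc a \<longrightarrow> i b < i (Suc a)"
      proof
        assume H: "S b = S (Suc a) \<and> b < Suc a"
        then have s0: "s a = 0" and Sba: "S b = S a" using IH SS by auto
        have "i a < i (Suc a)" using iord s0 Suc.prems by simp
        moreover have "b < a \<longrightarrow> i b < i a" using IH Sba by simp
        ultimately show "i b < i (Suc a)" using ba by (cases "b = a") auto
      qed
      then show ?thesis using IH SS by simp
    qed
  qed
  have zblock: "z (i a) = z v0 * tpar k r ^ a * qpar k r ^ S a" if "a \<le> k" for a
    using that
  proof (induction a)
    case 0 then show ?case unfolding v0_def S_def by simp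
  next
    case (Suc a)
    then have "z (i (Suc a)) = z (i a) * tpar k r * qpar k r ^ s a" using istep by simp
    then show ?case using Suc unfolding S_def by (simp add: power_add mult_ac)
  qed
  define \<kappa> where "\<kappa> j = tpar k r ^ ia j * qpar k r ^ S (ia j)" for j
  define param where "param y j = (if j \<in> B then y v0 * \<kappa> j else y j)" for y :: "nat \<Rightarrow> K" and j
  define M where "M = {m. f m \<noteq> 0}"
  have finM: "finite M" using fl unfolding laurent_def M_def by auto
  define acoef where "acoef m = f m * (\<Prod>j\<in>B. \<kappa> j powi (m ! j))" for m
  define E where "E m v = (if v = v0 then (\<Sum>j\<in>B. m ! j) else m ! v)" for m :: "int list" and v
  define xs where "xs = sorted_list_of_set Ot"
  define vs where "vs = rev xs @ [v0]"
  have setvs: "set vs = insert v0 Ot" unfolding vs_def xs_def using finOt by auto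
  have distvs: "distinct vs" unfolding vs_def xs_def using finOt v0Ot by simp
  have ID: "leval n f (param y) = (\<Sum>m\<in>M. acoef m * (\<Prod>v\<in>set vs. y v powi E m v))"
    if ynz: "\<forall>v\<in>set vs. y v \<noteq> 0" for y
  proof -
    have y0: "y v0 \<noteq> 0" using ynz setvs by simp
    have each: "f m * (\<Prod>j<n. param y j powi (m ! j)) = acoef m * (\<Prod>v\<in>set vs. y v powi E m v)" for m
    proof -
      have "(\<Prod>j<n. param y j powi (m ! j)) =
          (\<Prod>j\<in>Ot. param y j powi (m ! j)) * (\<Prod>j\<in>B. param y j powi (m ! j))"
        unfolding Ot_def using BOt by (intro prod.subset_diff) auto
      also have "(\<Prod>j\<in>Ot. param y j powi (m ! j)) = (\<Prod>j\<in>Ot. y j powi E m j)"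
        unfolding param_def E_def Ot_def using v0B by (intro prod.cong) auto
      also have "(\<Prod>j\<in>B. param y j powi (m ! j)) = (\<Prod>j\<in>B. \<kappa> j powi (m ! j) * y v0 powi (m ! j))"
        unfolding param_def by (intro prod.cong) (auto simp: power_int_mult_distrib mult.commute)
      also have "\<dots> = (\<Prod>j\<in>B. \<kappa> j powi (m ! j)) * y v0 powi E m v0"
        unfolding prod.distrib E_def using prod_powi_sum[OF finB y0] by simp
      finally have "(\<Prod>j<n. param y j powi (m ! j)) =
          (\<Prod>j\<in>Ot. y j powi E m j) * ((\<Prod>j\<in>B. \<kappa> j powi (m ! j)) * y v0 powi E m v0)" .
      moreover have "(\<Prod>v\<in>set vs. y v powi E m v) = y v0 powi E m v0 * (\<Prod>j\<in>Ot. y j powi E m j)"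
        unfolding setvs using finOt v0Ot by simp
      ultimately show ?thesis unfolding acoef_def by (simp add: mult_ac)
    qed
    show ?thesis unfolding leval_def M_def using each by simp
  qed
  have zparam: "leval n f z = leval n f (param z)"
  proof -
    have "param z = z"
    proof
      fix j show "param z j = z j"
      proof (cases "j \<in> B")
        case True
        then show ?thesis unfolding param_def \<kappa>_def
          using zblock[OF i_ia(2)[OF True]] i_ia(1)[OF True] by (simp add: mult.assoc)
      next
        case False then show ?thesis unfolding param_def by simp
      qed
    qed
    then show ?thesis by simp
  qed
  define Q where "Q = inverse (qpar k r)"
  define Cc where "Cc v = (if v = v0 then thalf k r powi (- (int n - 1 - 2 * int (card Ot)))
       else thalf k r powi (- (int n - 1 - 2 * int (card {j\<in>Ot. v < j}))))" for v
  have HYP: "\<forall>\<mu>::nat\<Rightarrow>nat. sorted_wrt (\<lambda>u v. \<mu> v < \<mu> u) vs \<longrightarrow>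
        (\<Sum>m\<in>M. acoef m * (\<Prod>v\<in>set vs. (Cc v * Q ^ \<mu> v) powi E m v)) = 0"
  proof (intro allI impI)
    fix \<mu> :: "nat \<Rightarrow> nat"
    assume sw: "sorted_wrt (\<lambda>u v. \<mu> v < \<mu> u) vs"
    have sw2: "sorted_wrt (\<lambda>a b. \<mu> a < \<mu> b) xs" and R1: "\<forall>j\<in>Ot. \<mu> v0 < \<mu> j"
      using sw finOt unfolding vs_def xs_def by (auto simp: sorted_wrt_append sorted_wrt_rev)
    have R2: "\<mu> j < \<mu> j'" if "j \<in> Ot" "j' \<in> Ot" "j < j'" for j j'
      using sorted_wrt_strict_mono[OF sw2 strict_sorted_list_of_set[of Ot, folded xs_def]] that finOt
      unfolding xs_def by simp
    define lam where "lam j = (if j \<in> Ot then int (\<mu> j) else if j \<in> B then int (\<mu> v0) - int (S (ia j)) else 0)" for j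
    have iB: "i a \<in> B" if "a \<le> k" for a unfolding B_def using that by simp
    have iOt: "i a \<notin> Ot" if "a \<le> k" for a unfolding Ot_def using iB[OF that] by simp
    have lam_i: "lam (i a) = int (\<mu> v0) - int (S a)" if "a \<le> k" for a
      unfolding lam_def using iB[OF that] iOt[OF that] ia_i[OF that] by simp
    have lam_Ot: "lam j = int (\<mu> j)" if "j \<in> Ot" for j unfolding lam_def using that by simp
    have split: "j \<in> Ot \<or> (\<exists>b\<le>k. j = i b)" if "j < n" for j
      using that unfolding Ot_def B_def by auto
    have OtB: "j \<in> Ot \<Longrightarrow> j < n" for j unfolding Ot_def by simp
    have rank_i: "rank_cnt n lam (i a) = card Ot + a" if a: "a \<le> k" for a
    proof -
      have "{j. j < n \<and> prec lam j (i a)} = Ot \<union> i ` {..<a}"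
      proof (rule set_eqI, rule iffI)
        fix j assume "j \<in> {j. j < n \<and> prec lam j (i a)}"
        then have jn: "j < n" and p: "prec lam j (i a)" by auto
        show "j \<in> Ot \<union> i ` {..<a}"
        proof (cases "j \<in> Ot")
          case True then show ?thesis by simp
        next
          case False
          then obtain b where b: "b \<le> k" "j = i b" using split[OF jn] by auto
          have "b < a"
          proof (rule ccontr)
            assume "\<not> b < a"
            then have "a \<le> b" by simp
            then have "S a \<le> S b \<and> (S a = S b \<and> a < b \<longrightarrow> i a < i b)" using CL b by simp
            moreover have "int (S b) < int (S a) \<or> (S b = S a \<and> i b < i a)"
              using p unfolding prec_def b(2) lam_i[OF b(1)] lam_i[OF a] by auto
            ultimately show False using \<open>a \<le> b\<close> by (cases "a = b") auto
          qed
          then show ?thesis using b by auto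
        qed
      next
        fix j assume "j \<in> Ot \<union> i ` {..<a}"
        then show "j \<in> {j. j < n \<and> prec lam j (i a)}"
        proof
          assume j: "j \<in> Ot"
          then show ?thesis using OtB[OF j] R1 j by (force simp: prec_def lam_Ot[OF j] lam_i[OF a])
        next
          assume "j \<in> i ` {..<a}"
          then obtain b where b: "b < a" "j = i b" by auto
          then have bk: "b \<le> k" using a by simp
          have "S b \<le> S a \<and> (S b = S a \<and> b < a \<longrightarrow> i b < i a)" using CL b a by simp
          then have "prec lam j (i a)"
            unfolding prec_def b(2) lam_i[OF bk] lam_i[OF a] using b(1) by auto
          then show ?thesis using b bk ilt by auto
        qed
      qed
      moreover have "card (Ot \<union> i ` {..<a}) = card Ot + a"
      proof -
        have "Ot \<inter> i ` {..<a} = {}" using iOt a by auto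
        moreover have "card (i ` {..<a}) = a"
          using card_image[OF inj_on_subset[OF iinj, of "{..<a}"]] a by (simp add: subset_iff)
        ultimately show ?thesis using finOt by (simp add: card_Un_disjoint)
      qed
      ultimately show ?thesis unfolding rank_cnt_prec by simp
    qed
    have rank_Ot: "rank_cnt n lam x = card {j\<in>Ot. x < j}" if x: "x \<in> Ot" for x
    proof -
      have "{j. j < n \<and> prec lam j x} = {j\<in>Ot. x < j}"
      proof (rule set_eqI, rule iffI)
        fix j assume "j \<in> {j. j < n \<and> prec lam j x}"
        then have jn: "j < n" and p: "prec lam j x" by auto
        show "j \<in> {j\<in>Ot. x < j}"
        proof (cases "j \<in> Ot")
          case True
          have "\<not> j < x" using R2[OF True x] p unfolding prec_def lam_Ot[OF True] lam_Ot[OF x] by auto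
          moreover have "j \<noteq> x" using p prec_irrefl by auto
          ultimately show ?thesis using True by simp
        next
          case False
          then obtain b where b: "b \<le> k" "j = i b" using split[OF jn] by auto
          have "lam j < lam x" unfolding b(2) lam_i[OF b(1)] lam_Ot[OF x] using R1 x by force
          then show ?thesis using p unfolding prec_def by simp
        qed
      next
        fix j assume "j \<in> {j\<in>Ot. x < j}"
        then have j: "j \<in> Ot" "x < j" by auto
        then show "j \<in> {j. j < n \<and> prec lam j x}"
          using R2[OF x j(1) j(2)] OtB[OF j(1)] by (simp add: prec_def lam_Ot[OF j(1)] lam_Ot[OF x])
      qed
      then show ?thesis unfolding rank_cnt_prec by simp
    qed
    have rho_i: "rho2 n lam (i a) = int n - 1 - 2 * int (card Ot) - 2 * int a" if "a \<le> k" for a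
      unfolding rho2_def rank_i[OF that] by simp
    have lamP: "lam \<in> Pset n" unfolding Pset_def lam_def Ot_def using BOt by auto
    have lamS: "lam \<in> S'set n k r"
    proof -
      have "S k \<le> r - 2" unfolding S_def using ssum by simp
      then have Sk: "int (S k) \<le> int r - 2" using r by linarith
      have "nbhd n (k + 1) (r - 1) lam (i 0) (i k) \<and> lam (i 0) - lam (i k) \<le> int r - 2"
        unfolding nbhd_def using ilt rho_i[of 0] rho_i[of k] lam_i[of 0] lam_i[of k] Sk r
        by (simp add: S_def of_nat_diff)
      then show ?thesis unfolding S'set_def using lamP by blast
    qed
    define Y where "Y v = Cc v * Q ^ \<mu> v" for v
    have up: "upoint n k r lam j = param Y j" if jn: "j < n" for j
    proof (cases "j \<in> Ot")
      case True
      have jv: "j \<noteq> v0" using True v0Ot by auto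
      have jB: "j \<notin> B" using True unfolding Ot_def by simp
      show ?thesis unfolding upoint_lt[OF jn] param_def Y_def Cc_def Q_def
        using jv jB by (simp add: rho2_def rank_Ot[OF True] lam_Ot[OF True] qinv_powi)
    next
      case False
      then obtain a where a: "a \<le> k" "j = i a" using split[OF jn] by auto
      have jB: "j \<in> B" using iB[OF a(1)] a(2) by simp
      let ?T = "thalf k r" and ?q = "qpar k r"
      have e1: "- rho2 n lam j = - (int n - 1 - 2 * int (card Ot)) + int (2 * a)"
        using rho_i[OF a(1)] a(2) by simp
      have e2: "- lam j = - int (\<mu> v0) + int (S a)" using lam_i[OF a(1)] a(2) by simp
      have A1: "?T powi (- rho2 n lam j) = ?T powi (- (int n - 1 - 2 * int (card Ot))) * ?T ^ (2 * a)"
        unfolding e1 power_int_add[OF disjI1[OF thalf_nz]] power_int_of_nat ..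
      have A2: "?q powi (- lam j) = Q ^ \<mu> v0 * ?q ^ S a"
        unfolding e2 Q_def using power_int_add[of ?q "- int (\<mu> v0)" "int (S a)"] qpar_nz[of k r]
        by (simp add: qinv_powi)
      have "\<kappa> j = ?T ^ (2 * a) * ?q ^ S a"
        unfolding \<kappa>_def a(2) ia_i[OF a(1)] tpar_thalf by (simp add: power_mult)
      then show ?thesis unfolding upoint_lt[OF jn] param_def Y_def Cc_def A1 A2
        using jB by (simp add: mult_ac)
    qed
    have "leval n f (upoint n k r lam) = 0" using fJ lamS unfolding ueval_def by blast
    then have "leval n f (param Y) = 0" using leval_cong[of n "upoint n k r lam" "param Y" f] up by simp
    moreover have "\<forall>v\<in>set vs. Y v \<noteq> 0"
      unfolding Y_def Cc_def Q_def using thalf_nz qpar_nz by simp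
    ultimately show "(\<Sum>m\<in>M. acoef m * (\<Prod>v\<in>set vs. (Cc v * Q ^ \<mu> v) powi E m v)) = 0"
      using ID[of Y] unfolding Y_def by simp
  qed
  have "(\<Sum>m\<in>M. acoef m * (\<Prod>v\<in>set vs. z v powi E m v)) = 0"
  proof (rule chain_vanish[OF distvs finM _ _ _ HYP])
    show "\<forall>v\<in>set vs. Cc v \<noteq> 0" unfolding Cc_def using thalf_nz by simp
    show "Q \<noteq> 0" unfolding Q_def using qpar_nz by simp
    show "\<forall>m::int. m \<noteq> 0 \<longrightarrow> Q powi m \<noteq> 1"
      unfolding Q_def using qpar_nonroot by (simp add: power_int_inverse)
    show "\<forall>v\<in>set vs. z v \<noteq> 0" using znz setvs BOt v0B unfolding Ot_def by auto
  qed
  moreover have "\<forall>v\<in>set vs. z v \<noteq> 0" using znz setvs BOt v0B unfolding Ot_def by auto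
  ultimately show ?thesis using zparam ID by simp
qed



lemma upoint_Zset: "wheel_cond n k r (upoint n k r lam) ii s \<Longrightarrow> upoint n k r lam \<in> Zset n k r"
  unfolding Zset_def using upoint_nz[of _ n k r lam] by (auto simp: upoint_def)

lemma wheel_trunc:
  assumes "wheel_cond n k r z ii s"
  shows "wheel_cond n k r z (\<lambda>a. if a \<le> k then ii a else 0) s"
proof -
  have "inj_on (\<lambda>a. if a \<le> k then ii a else 0) {..k}"
    using assms unfolding wheel_cond_def by (auto simp: inj_on_def)
  then show ?thesis using assms unfolding wheel_cond_def by auto
qed

lemma wheels_finite: "finite (wheels n k r lam)"
proof -
  have "wheels n k r lam \<subseteq> (\<lambda>f a. if a \<le> k then f a else 0) ` (PiE {..k} (\<lambda>_. {..<n}))"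
  proof
    fix ii assume ii: "ii \<in> wheels n k r lam"
    then have z: "\<forall>a>k. ii a = 0" and lt: "\<forall>a\<le>k. ii a < n"
      unfolding wheels_def wheel_cond_def by auto
    have "restrict ii {..k} \<in> PiE {..k} (\<lambda>_. {..<n})" using lt by auto
    moreover have "ii = (\<lambda>a. if a \<le> k then restrict ii {..k} a else 0)"
      using z by (auto simp: fun_eq_iff)
    ultimately show "ii \<in> (\<lambda>f a. if a \<le> k then f a else 0) ` (PiE {..k} (\<lambda>_. {..<n}))" by blast
  qed
  moreover have "finite (PiE {..k} (\<lambda>_. {..<n::nat}))" by (intro finite_PiE) auto
  ultimately show ?thesis using finite_subset by blast
qed

lemma sharp_pos: "wheels n k r lam \<noteq> {} \<Longrightarrow> sharp n k r lam \<ge> 1"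
  unfolding sharp_def using wheels_finite[of n k r lam]
  by (simp add: Suc_le_eq card_gt_0_iff)

lemma sharp_ne: "sharp n k r lam \<ge> 1 \<Longrightarrow> wheels n k r lam \<noteq> {}"
  unfolding sharp_def by auto

lemma S_wheels: "r \<ge> 2 \<Longrightarrow> lam \<in> Sset n k r \<Longrightarrow> wheels n k r lam \<noteq> {}"
proof -
  assume r: "r \<ge> 2" and l: "lam \<in> Sset n k r"
  then obtain i j where "nbhd n (k + 1) (r - 1) lam i j" unfolding Sset_def by auto
  then obtain ii s where "wheel_cond n k r (upoint n k r lam) ii s" using wheel_of_nbhd[OF r] by blast
  then have "wheel_cond n k r (upoint n k r lam) (\<lambda>a. if a \<le> k then ii a else 0) s" by (rule wheel_trunc)
  then have "(\<lambda>a. if a \<le> k then ii a else 0) \<in> wheels n k r lam" unfolding wheels_def by auto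
  then show ?thesis by blast
qed

lemma S'_sub_S: "S'set n k r \<subseteq> Sset n k r"
  unfolding S'set_def Sset_def by auto

lemma I_sub_J1: "Iideal n k r \<subseteq> J1 n k r"
proof
  fix f assume f: "f \<in> Iideal n k r"
  show "f \<in> J1 n k r" unfolding J1_def
  proof (intro CollectI conjI ballI impI)
    show "f \<in> laurent n" using f unfolding Iideal_def by simp
    fix lam assume "lam \<in> Pset n" "1 \<le> sharp n k r lam"
    then obtain ii where "ii \<in> wheels n k r lam" using sharp_ne by blast
    then obtain s where "wheel_cond n k r (upoint n k r lam) ii s" unfolding wheels_def by auto
    then have "upoint n k r lam \<in> Zset n k r" by (rule upoint_Zset)
    then show "ueval n k r lam f = 0" using f unfolding Iideal_def ueval_def by auto
  qed
qed

lemma I_sub_J2: "r \<ge> 2 \<Longrightarrow> Iideal n k r \<subseteq> J2 n k r"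
proof
  fix f assume r: "r \<ge> 2" and f: "f \<in> Iideal n k r"
  show "f \<in> J2 n k r" unfolding J2_def
  proof (intro CollectI conjI ballI impI)
    show "f \<in> laurent n" using f unfolding Iideal_def by simp
    fix lam assume "lam \<in> Sset n k r"
    then obtain ii where "ii \<in> wheels n k r lam" using S_wheels[OF r] by blast
    then obtain s where "wheel_cond n k r (upoint n k r lam) ii s" unfolding wheels_def by auto
    then have "upoint n k r lam \<in> Zset n k r" by (rule upoint_Zset)
    then show "ueval n k r lam f = 0" using f unfolding Iideal_def ueval_def by auto
  qed
qed

lemma J2_sub_J3: "J2 n k r \<subseteq> J3 n k r"
  unfolding J2_def J3_def using S'_sub_S by blast

lemma J1_sub_J3: "r \<ge> 2 \<Longrightarrow> J1 n k r \<subseteq> J3 n k r"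
proof
  fix f assume r: "r \<ge> 2" and f: "f \<in> J1 n k r"
  show "f \<in> J3 n k r" unfolding J3_def
  proof (intro CollectI conjI ballI)
    show "f \<in> laurent n" using f unfolding J1_def by simp
    fix lam assume l: "lam \<in> S'set n k r"
    then have "lam \<in> Sset n k r" using S'_sub_S by blast
    then have "sharp n k r lam \<ge> 1" using S_wheels[OF r] sharp_pos by blast
    moreover have "lam \<in> Pset n" using l unfolding S'set_def by simp
    ultimately show "ueval n k r lam f = 0" using f unfolding J1_def by auto
  qed
qed

lemma J3_sub_I': "r \<ge> 2 \<Longrightarrow> J3 n k r \<subseteq> Iideal n k r"
proof
  fix f assume r: "r \<ge> 2" and f: "f \<in> J3 n k r"
  then show "f \<in> Iideal n k r" unfolding Iideal_def
    using J3_sub_I[OF r f] f unfolding J3_def by auto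
qed

theorem lemma3p1:
  fixes n k r :: nat
  assumes "n \<ge> 2" and "1 \<le> k" and "k \<le> n - 1" and "r \<ge> 2"
  shows "Iideal n k r = J1 n k r \<and> Iideal n k r = J2 n k r \<and> Iideal n k r = J3 n k r"
  using I_sub_J1[of n k r] I_sub_J2[OF assms(4), of n k] J2_sub_J3[of n k r]
    J1_sub_J3[OF assms(4), of n k] J3_sub_I'[OF assms(4), of n k]
  by blast

end
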